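(* Let $f^{(0)}$ be a harmonic function in a Jordan domain in $\mathbb{C}$ (with coordinate $w=x+iy$) with nonvanishing Hessian. Let $g(w)$ be a complex analytic function with real part $f^{(0)}(w)/2$, and let $h(w)$ be an antiderivative of a continuous branch of $\sqrt{g''(w)}$. Then the function $$f(w,t)=2\,\mathrm{Re}\,g(w)+|h(w)|^2\,t+\mathrm{Re}\!\left(h(w)^2\right)\log|h'(w)|\,t^2$$ satisfies $f_{w\bar w}=t\sqrt{f_{ww}f_{\bar w\bar w}}+o(t^2)$ as $t\to0$.
   Context: Wirtinger derivatives: $f_w=\tfrac12(f_x-if_y)$, $f_{\bar w}=\tfrac12(f_x+if_y)$. *)

theory Defs
  imports "HOL-Complex_Analysis.Complex_Analysis"
begin

text \<open>Plane coordinates w = x + i y. Partial derivatives of a function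
  F :: complex => complex (real-valued functions are embedded via of_real).\<close>

definition dx :: "(complex \<Rightarrow> complex) \<Rightarrow> complex \<Rightarrow> complex" where
  "dx F w = vector_derivative (\<lambda>s::real. F (w + of_real s)) (at 0)"

definition dy :: "(complex \<Rightarrow> complex) \<Rightarrow> complex \<Rightarrow> complex" where
  "dy F w = vector_derivative (\<lambda>s::real. F (w + \<i> * of_real s)) (at 0)"

definition wirt :: "(complex \<Rightarrow> complex) \<Rightarrow> complex \<Rightarrow> complex" where
  "wirt F w = (dx F w - \<i> * dy F w) / 2"

definition wirt_bar :: "(complex \<Rightarrow> complex) \<Rightarrow> complex \<Rightarrow> complex" where
  "wirt_bar F w = (dx F w + \<i> * dy F w) / 2"

definition C2_on :: "complex set \<Rightarrow> (complex \<Rightarrow> real) \<Rightarrow> bool" where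
  "C2_on D f \<longleftrightarrow>
     (let F = (\<lambda>w. complex_of_real (f w)) in
       (\<forall>w\<in>D. F differentiable (at w)) \<and>
       (\<forall>w\<in>D. dx F differentiable (at w) \<and> dy F differentiable (at w)) \<and>
       continuous_on D (dx (dx F)) \<and> continuous_on D (dx (dy F)) \<and>
       continuous_on D (dy (dx F)) \<and> continuous_on D (dy (dy F)))"

definition harmonic_on :: "complex set \<Rightarrow> (complex \<Rightarrow> real) \<Rightarrow> bool" where
  "harmonic_on D f \<longleftrightarrow> open D \<and> C2_on D f \<and>
     (\<forall>w\<in>D. dx (dx (\<lambda>z. complex_of_real (f z))) w
              + dy (dy (\<lambda>z. complex_of_real (f z))) w = 0)"

definition hessian_det :: "(complex \<Rightarrow> real) \<Rightarrow> complex \<Rightarrow> complex" where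
  "hessian_det f w = (let F = (\<lambda>z. complex_of_real (f z)) in
     dx (dx F) w * dy (dy F) w - dy (dx F) w * dx (dy F) w)"

definition jordan_domain :: "complex set \<Rightarrow> bool" where
  "jordan_domain D \<longleftrightarrow> (\<exists>c. simple_path c \<and> pathfinish c = pathstart c \<and>
                              D = inside (path_image c))"

end

theory Submission imports Defs begin

definition WD :: "(complex \<Rightarrow> complex) \<Rightarrow> complex \<Rightarrow> complex \<Rightarrow> complex \<Rightarrow> bool" where
  "WD F a b z \<longleftrightarrow> (F has_derivative (\<lambda>d. a*d + b*cnj d)) (at z)"

lemma WD_hol: "(F has_field_derivative a) (at z) \<Longrightarrow> WD F a 0 z"
  unfolding WD_def has_field_derivative_def by simp

lemma WD_const: "WD (\<lambda>_. c) 0 0 z"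
  unfolding WD_def by simp

lemma WD_cnj: "WD F a b z \<Longrightarrow> WD (\<lambda>w. cnj (F w)) (cnj b) (cnj a) z"
  unfolding WD_def
  by (drule has_derivative_cnj) (simp add: algebra_simps)

lemma WD_add: "WD F a b z \<Longrightarrow> WD G c e z \<Longrightarrow> WD (\<lambda>w. F w + G w) (a + c) (b + e) z"
  unfolding WD_def
  by (drule (1) has_derivative_add) (simp add: algebra_simps)

lemma WD_mult: "WD F a b z \<Longrightarrow> WD G c e z \<Longrightarrow>
   WD (\<lambda>w. F w * G w) (a * G z + F z * c) (b * G z + F z * e) z"
  unfolding WD_def
  by (drule (1) has_derivative_mult) (simp add: algebra_simps)

lemma WD_cong: "WD F a b z \<Longrightarrow> a = a' \<Longrightarrow> b = b' \<Longrightarrow> WD F a' b' z"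
  by simp

lemma WD_transform: "WD F a b z \<Longrightarrow> open S \<Longrightarrow> z \<in> S \<Longrightarrow> (\<And>w. w \<in> S \<Longrightarrow> F w = G w) \<Longrightarrow> WD G a b z"
  unfolding WD_def by (rule has_derivative_transform_within_open)

lemma WD_dx: assumes "WD F a b z" shows "dx F z = a + b"
proof -
  have "((\<lambda>s::real. z + of_real s) has_derivative (\<lambda>d. of_real d)) (at 0)"
    by (auto intro!: derivative_eq_intros)
  moreover have "(F has_derivative (\<lambda>d. a*d + b*cnj d)) (at (z + of_real 0))"
    using assms unfolding WD_def by simp
  ultimately have "((\<lambda>s. F (z + of_real s)) has_derivative (\<lambda>d. a * of_real d + b*cnj(of_real d))) (at 0)"
    by (rule has_derivative_compose[unfolded o_def])
  moreover have "(\<lambda>d. a * of_real d + b*cnj(of_real d)) = (\<lambda>d::real. d *\<^sub>R (a+b))"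
    by (auto simp: fun_eq_iff scaleR_conv_of_real algebra_simps)
  ultimately have "((\<lambda>s. F (z + of_real s)) has_vector_derivative (a+b)) (at 0)"
    unfolding has_vector_derivative_def by simp
  then show ?thesis unfolding dx_def by (rule vector_derivative_at)
qed

lemma WD_dy: assumes "WD F a b z" shows "dy F z = \<i>*a - \<i>*b"
proof -
  have "((\<lambda>s::real. z + \<i> * of_real s) has_derivative (\<lambda>d. \<i> * of_real d)) (at 0)"
    by (auto intro!: derivative_eq_intros)
  moreover have "(F has_derivative (\<lambda>d. a*d + b*cnj d)) (at (z + \<i> * of_real 0))"
    using assms unfolding WD_def by simp
  ultimately have "((\<lambda>s. F (z + \<i> * of_real s)) has_derivative (\<lambda>d. a*(\<i> * of_real d) + b*cnj(\<i> * of_real d))) (at 0)"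
    by (rule has_derivative_compose[unfolded o_def])
  moreover have "(\<lambda>d. a*(\<i> * of_real d) + b*cnj(\<i> * of_real d)) = (\<lambda>d::real. d *\<^sub>R (\<i>*a - \<i>*b))"
    by (auto simp: fun_eq_iff scaleR_conv_of_real algebra_simps)
  ultimately have "((\<lambda>s. F (z + \<i> * of_real s)) has_vector_derivative (\<i>*a - \<i>*b)) (at 0)"
    unfolding has_vector_derivative_def by simp
  then show ?thesis unfolding dy_def by (rule vector_derivative_at)
qed

lemma WD_wirt: assumes "WD F a b z" shows "wirt F z = a"
  unfolding wirt_def WD_dx[OF assms] WD_dy[OF assms] by (simp add: ring_distribs mult.assoc[symmetric])
lemma WD_wirt_bar: assumes "WD F a b z" shows "wirt_bar F z = b"
  unfolding wirt_bar_def WD_dx[OF assms] WD_dy[OF assms] by (simp add: ring_distribs mult.assoc[symmetric])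


lemma WD_cmult: "WD F a b z \<Longrightarrow> WD (\<lambda>w. c * F w) (c*a) (c*b) z"
  using WD_mult[OF WD_const[of c z]] by simp

lemma WD_cnj_hol: "(F has_field_derivative a) (at z) \<Longrightarrow> WD (\<lambda>w. cnj (F w)) 0 (cnj a) z"
  using WD_cnj[OF WD_hol] by simp

lemma of_real_Re: "complex_of_real (Re w) = (w + cnj w) / 2"
  using complex_add_cnj[of w] by simp

theorem proposition1:
  fixes D :: "complex set" and f0 :: "complex \<Rightarrow> real"
    and g h s :: "complex \<Rightarrow> complex"
  assumes "jordan_domain D"
    and "harmonic_on D f0"
    and "\<forall>w\<in>D. hessian_det f0 w \<noteq> 0"
    and "g holomorphic_on D"
    and "\<forall>w\<in>D. Re (g w) = f0 w / 2"
    and "continuous_on D s"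
    and "\<forall>w\<in>D. (s w)\<^sup>2 = deriv (deriv g) w"
    and "\<forall>w\<in>D. (h has_field_derivative s w) (at w)"
  defines "f \<equiv> (\<lambda>(t::real) (w::complex). complex_of_real
              (2 * Re (g w) + (cmod (h w))\<^sup>2 * t
               + Re ((h w)\<^sup>2) * ln (cmod (deriv h w)) * t\<^sup>2))"
  shows "\<forall>w\<in>D. ((\<lambda>t. (wirt_bar (wirt (f t)) w
                   - of_real t * csqrt (wirt (wirt (f t)) w * wirt_bar (wirt_bar (f t)) w))
                   / of_real (t\<^sup>2)) \<longlongrightarrow> 0) (at 0)"
proof
  fix w0 assume w0: "w0 \<in> D"
  have oD: "open D"
    using assms(1) unfolding jordan_domain_def
    by (metis closed_path_image open_inside simple_path_imp_path)
  have hD: "\<And>z. z \<in> D \<Longrightarrow> (h has_field_derivative s z) (at z)" using assms(8) by blast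
  have hhol: "h holomorphic_on D"
    using hD oD holomorphic_on_open by blast
  have derh: "\<And>z. z \<in> D \<Longrightarrow> deriv h z = s z" using hD DERIV_imp_deriv by blast
  have shol: "s holomorphic_on D"
    using holomorphic_transform[OF holomorphic_deriv[OF hhol oD] derh] by blast
  define s1 where "s1 = deriv s"
  define s2 where "s2 = deriv s1"
  define g1 where "g1 = deriv g"
  define g2 where "g2 = deriv g1"
  have s1hol: "s1 holomorphic_on D" unfolding s1_def using holomorphic_deriv[OF shol oD] .
  have g1hol: "g1 holomorphic_on D" unfolding g1_def using holomorphic_deriv[OF assms(4) oD] .
  have sD: "\<And>z. z \<in> D \<Longrightarrow> (s has_field_derivative s1 z) (at z)"
    unfolding s1_def using holomorphic_derivI[OF shol oD] by blast
  have s1D: "\<And>z. z \<in> D \<Longrightarrow> (s1 has_field_derivative s2 z) (at z)"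
    unfolding s2_def using holomorphic_derivI[OF s1hol oD] by blast
  have gD: "\<And>z. z \<in> D \<Longrightarrow> (g has_field_derivative g1 z) (at z)"
    unfolding g1_def using holomorphic_derivI[OF assms(4) oD] by blast
  have g1D: "\<And>z. z \<in> D \<Longrightarrow> (g1 has_field_derivative g2 z) (at z)"
    unfolding g2_def using holomorphic_derivI[OF g1hol oD] by blast
  have g2s: "\<And>z. z \<in> D \<Longrightarrow> g2 z = (s z)^2" using assms(7) unfolding g2_def g1_def by simp
  define F0 where "F0 = (\<lambda>z. complex_of_real (f0 z))"
  have F0eq: "\<And>z. z \<in> D \<Longrightarrow> F0 z = g z + cnj (g z)"
  proof -
    fix z assume "z \<in> D"
    then have "f0 z = 2 * Re (g z)" using assms(5) by force
    then show "F0 z = g z + cnj (g z)" unfolding F0_def by (simp add: complex_add_cnj)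
  qed
  have WF0: "WD F0 (g1 z) (cnj (g1 z)) z" if "z \<in> D" for z
    using WD_transform[OF WD_add[OF WD_hol[OF gD] WD_cnj[OF WD_hol[OF gD]]] oD] that F0eq
    by simp
  have dxF0: "\<And>z. z \<in> D \<Longrightarrow> dx F0 z = g1 z + cnj (g1 z)"
    using WD_dx[OF WF0] by simp
  have dyF0: "\<And>z. z \<in> D \<Longrightarrow> dy F0 z = \<i> * g1 z + (- \<i>) * cnj (g1 z)"
    using WD_dy[OF WF0] by simp
  have W1: "WD (dx F0) (g2 w0) (cnj (g2 w0)) w0"
  proof (rule WD_transform[OF _ oD w0])
    show "WD (\<lambda>z. g1 z + cnj (g1 z)) (g2 w0) (cnj (g2 w0)) w0"
      using WD_add[OF WD_hol[OF g1D[OF w0]] WD_cnj[OF WD_hol[OF g1D[OF w0]]]] by simp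
  qed (simp add: dxF0)
  have W2: "WD (dy F0) (\<i> * g2 w0) (- \<i> * cnj (g2 w0)) w0"
  proof (rule WD_transform[OF _ oD w0])
    show "WD (\<lambda>z. \<i> * g1 z + (- \<i>) * cnj (g1 z)) (\<i> * g2 w0) (- \<i> * cnj (g2 w0)) w0"
      using WD_add[OF WD_cmult[OF WD_hol[OF g1D[OF w0]], of "\<i>"] WD_cmult[OF WD_cnj[OF WD_hol[OF g1D[OF w0]]], of "-\<i>"]] by simp
  qed (simp add: dyF0)
  have "g2 w0 \<noteq> 0"
  proof
    assume "g2 w0 = 0"
    then have "hessian_det f0 w0 = 0"
      unfolding hessian_det_def Let_def F0_def[symmetric]
      using WD_dx[OF W1] WD_dy[OF W1] WD_dx[OF W2] WD_dy[OF W2] by simp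
    then show False using assms(3) w0 by blast
  qed
  then have sw0: "s w0 \<noteq> 0" using g2s[OF w0] by simp
  define c where "c = s w0 / of_real (cmod (s w0))"
  have cn: "cmod c = 1" using sw0 unfolding c_def by (simp add: norm_divide)
  have c0: "c \<noteq> 0" using cn by auto
  define U where "U = D \<inter> (\<lambda>z. Re (s z / c)) -` {0<..}"
  have oU: "open U" unfolding U_def
    by (rule continuous_open_preimage[OF _ oD]) (use c0 in \<open>auto intro!: continuous_intros assms(6)\<close>)
  have UD: "U \<subseteq> D" unfolding U_def by auto
  have w0U: "w0 \<in> U" unfolding U_def using w0 sw0 by (simp add: c_def)
  have Upos: "\<And>z. z \<in> U \<Longrightarrow> 0 < Re (s z / c)" unfolding U_def by auto
  have snz: "\<And>z. z \<in> U \<Longrightarrow> s z \<noteq> 0" using Upos by fastforce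
  define L where "L = (\<lambda>z. Ln (s z / c))"
  define k where "k = (\<lambda>z. s1 z / s z)"
  define k' where "k' = (\<lambda>z. (s2 z * s z - s1 z * s1 z) / (s z * s z))"
  have LD: "(L has_field_derivative k z) (at z)" if z: "z \<in> U" for z
  proof -
    have "s z / c \<notin> \<real>\<^sub>\<le>\<^sub>0" using Upos[OF z] by (auto simp: complex_nonpos_Reals_iff)
    moreover have "((\<lambda>z. s z / c) has_field_derivative (s1 z / c)) (at z)"
      using sD[of z] z UD c0 by (auto intro!: derivative_eq_intros)
    ultimately have "(L has_field_derivative inverse (s z / c) * (s1 z / c)) (at z)"
      unfolding L_def by (rule DERIV_chain2[OF has_field_derivative_Ln])
    then show ?thesis by (rule DERIV_cong) (use c0 snz[OF z] in \<open>simp add: k_def field_simps\<close>)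
  qed
  have kD: "(k has_field_derivative k' z) (at z)" if z: "z \<in> U" for z
    unfolding k_def k'_def using DERIV_divide[OF s1D sD snz[OF z]] z UD by auto
  have ReL: "Re (L z) = ln (cmod (s z))" if z: "z \<in> U" for z
    using snz[OF z] c0 cn unfolding L_def by (simp add: norm_divide)
  define Lr where "Lr = (\<lambda>z. complex_of_real (Re (L z)))"
  define Q where "Q = (\<lambda>z. complex_of_real (Re (h z * h z)))"
  have WLr: "WD Lr (k z / 2) (cnj (k z) / 2) z" if z: "z \<in> U" for z
  proof -
    have "Lr = (\<lambda>z. inverse 2 * (L z + cnj (L z)))" unfolding Lr_def by (simp add: fun_eq_iff of_real_Re)
    then show ?thesis using WD_cmult[OF WD_add[OF WD_hol[OF LD[OF z]] WD_cnj[OF WD_hol[OF LD[OF z]]]], of "inverse 2"]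
      by (simp add: field_simps)
  qed
  have WQ: "WD Q (h z * s z) (cnj (h z * s z)) z" if z: "z \<in> D" for z
  proof -
    have "Q = (\<lambda>z. inverse 2 * (h z * h z + cnj (h z * h z)))" unfolding Q_def of_real_Re by (simp add: fun_eq_iff field_simps)
    moreover have hh: "WD (\<lambda>z. h z * h z) (2 * (h z * s z)) 0 z"
      using WD_mult[OF WD_hol[OF hD[OF z]] WD_hol[OF hD[OF z]]] by (simp add: algebra_simps)
    ultimately show ?thesis using WD_cmult[OF WD_add[OF hh WD_cnj[OF hh]], of "inverse 2"]
      by simp
  qed
  have fG: "f t z = g z + cnj (g z) + of_real t * (h z * cnj (h z)) + of_real t * of_real t * (Q z * Lr z)"
    if z: "z \<in> U" for t z
  proof -
    have "complex_of_real (2 * Re (g z)) = g z + cnj (g z)" by (simp add: complex_add_cnj)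
    moreover have "complex_of_real ((cmod (h z))\<^sup>2) = h z * cnj (h z)" by (rule complex_norm_square)
    moreover have "complex_of_real (ln (cmod (deriv h z))) = Lr z"
      unfolding Lr_def using ReL[OF z] derh[of z] z UD by auto
    moreover have "complex_of_real (Re ((h z)\<^sup>2)) = Q z" unfolding Q_def by (simp add: power2_eq_square)
    ultimately show ?thesis unfolding f_def
      by (simp add: power2_eq_square algebra_simps)
  qed
  define A where "A = (\<lambda>t z. g1 z + of_real t * (s z * cnj (h z))
      + of_real t * of_real t * (h z * s z * Lr z + Q z * (inverse 2 * k z)))"
  have WA: "WD (f t) (A t z) (cnj (A t z)) z" if z: "z \<in> U" for t z
  proof (rule WD_transform[OF _ oU z])
    have zD: "z \<in> D" using z UD by auto
    have "WD (\<lambda>z. g z + cnj (g z) + of_real t * (h z * cnj (h z)) + of_real t * of_real t * (Q z * Lr z))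
      (g1 z + 0 + of_real t * (s z * cnj (h z) + h z * 0) + of_real t * of_real t * (h z * s z * Lr z + Q z * (k z / 2)))
      (0 + cnj (g1 z) + of_real t * (0 * cnj (h z) + h z * cnj (s z)) + of_real t * of_real t * (cnj (h z * s z) * Lr z + Q z * (cnj (k z) / 2))) z"
      by (intro WD_add WD_cmult WD_mult WD_hol WD_cnj_hol WD_cnj gD hD zD WQ WLr z)
    then show "WD (\<lambda>z. g z + cnj (g z) + of_real t * (h z * cnj (h z)) + of_real t * of_real t * (Q z * Lr z)) (A t z) (cnj (A t z)) z"
      by (rule WD_cong) (simp_all add: A_def Q_def Lr_def algebra_simps)
  qed (simp add: fG)
  define a0 where "a0 = g2 w0"
  define a1 where "a1 = s1 w0 * cnj (h w0)"
  define a2 where "a2 = (s w0 * s w0 + h w0 * s1 w0) * Lr w0 + h w0 * s w0 * (k w0 / 2)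
     + (h w0 * s w0 * (inverse 2 * k w0) + Q w0 * (inverse 2 * k' w0))"
  define c1 where "c1 = s w0 * cnj (s w0)"
  define c2 where "c2 = h w0 * s w0 * (cnj (k w0) / 2) + cnj (h w0 * s w0) * (inverse 2 * k w0)"
  have WAw: "WD (A t) (a0 + of_real t * a1 + of_real t * of_real t * a2) (of_real t * c1 + of_real t * of_real t * c2) w0" for t
  proof -
    have ik: "WD (\<lambda>z. inverse 2 * k z) (inverse 2 * k' w0) (inverse 2 * 0) w0"
      by (rule WD_cmult[OF WD_hol[OF kD[OF w0U]]])
    have "WD (A t) (g2 w0 + of_real t * (s1 w0 * cnj (h w0) + s w0 * 0) + of_real t * of_real t * (
           ((s w0 * s w0 + h w0 * s1 w0) * Lr w0 + h w0 * s w0 * (k w0 / 2))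
           + (h w0 * s w0 * (inverse 2 * k w0) + Q w0 * (inverse 2 * k' w0))))
       (0 + of_real t * (0 * cnj (h w0) + s w0 * cnj (s w0)) + of_real t * of_real t * (
           ((0 * s w0 + h w0 * 0) * Lr w0 + h w0 * s w0 * (cnj (k w0) / 2))
           + (cnj (h w0 * s w0) * (inverse 2 * k w0) + Q w0 * (inverse 2 * 0)))) w0"
      unfolding A_def
      by (intro WD_add WD_cmult WD_mult WD_hol WD_cnj_hol WD_cnj g1D sD hD w0 WQ WLr w0U ik)
    then show ?thesis by (rule WD_cong) (simp_all add: a0_def a1_def a2_def c1_def c2_def algebra_simps)
  qed
  have wA: "wirt (f t) z = A t z" if "z \<in> U" for t z using WD_wirt[OF WA[OF that]] .
  have wbA: "wirt_bar (f t) z = cnj (A t z)" if "z \<in> U" for t z using WD_wirt_bar[OF WA[OF that]] .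
  have W2: "WD (wirt (f t)) (a0 + of_real t * a1 + of_real t * of_real t * a2) (of_real t * c1 + of_real t * of_real t * c2) w0" for t
    by (rule WD_transform[OF WAw oU w0U]) (simp add: wA)
  have W3: "WD (wirt_bar (f t)) (cnj (of_real t * c1 + of_real t * of_real t * c2)) (cnj (a0 + of_real t * a1 + of_real t * of_real t * a2)) w0" for t
    by (rule WD_transform[OF WD_cnj[OF WAw] oU w0U]) (simp add: wbA)
  define P where "P = (\<lambda>u. (a0 + u * a1 + u * u * a2) * (cnj a0 + u * cnj a1 + u * u * cnj a2))"
  have ww: "wirt (wirt (f t)) w0 * wirt_bar (wirt_bar (f t)) w0 = P (of_real t)" for t
    unfolding WD_wirt[OF W2] WD_wirt_bar[OF W3] P_def by simp
  have wbw: "wirt_bar (wirt (f t)) w0 = of_real t * c1 + of_real t * of_real t * c2" for t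
    using WD_wirt_bar[OF W2] .
  have a0s: "a0 = s w0 * s w0" unfolding a0_def using g2s[OF w0] by (simp add: power2_eq_square)
  have c1r: "c1 = of_real ((cmod (s w0))\<^sup>2)" unfolding c1_def by (rule complex_norm_square[symmetric])
  have P0c: "P 0 = c1 * c1" unfolding P_def a0s c1_def by (simp add: algebra_simps)
  have P0: "P 0 = of_real (((cmod (s w0))\<^sup>2)\<^sup>2)"
  proof -
    show ?thesis using P0c c1r by (metis of_real_mult power2_eq_square)
  qed
  have cpos: "0 < cmod (s w0)" using sw0 by simp
  have P0n: "P 0 \<notin> \<real>\<^sub>\<le>\<^sub>0" unfolding P0 using cpos by (auto simp: complex_nonpos_Reals_iff)
  have sqP0: "csqrt (P 0) = c1" unfolding P0c using csqrt_square[of c1] cpos unfolding c1r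
    by (simp add: power2_eq_square)
  have dP: "(P has_field_derivative (a1 * cnj a0 + a0 * cnj a1)) (at 0)"
    unfolding P_def by (auto intro!: derivative_eq_intros)
  have dpsi: "((\<lambda>u. csqrt (P u)) has_field_derivative (a1 * cnj a0 + a0 * cnj a1) / (2 * c1)) (at 0)"
    using has_field_derivative_csqrt'[OF dP P0n] sqP0 by simp
  have c1nz: "c1 \<noteq> 0" unfolding c1r using cpos by simp
  have c2eq: "c2 = (a1 * cnj a0 + a0 * cnj a1) / (2 * c1)"
    using sw0 unfolding c2_def a0s a1_def c1_def k_def by (simp add: field_simps)
  have lim1: "((\<lambda>u. (csqrt (P (0 + u)) - csqrt (P 0)) / u) \<longlongrightarrow> c2) (at 0)"
    using dpsi unfolding DERIV_def c2eq .
  have ofr: "filterlim (\<lambda>t::real. complex_of_real t) (at 0) (at 0)"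
    by (rule filterlim_atI) (auto intro!: tendsto_eq_intros simp: eventually_at_filter)
  have lim2: "((\<lambda>t. (csqrt (P (of_real t)) - c1) / of_real t) \<longlongrightarrow> c2) (at (0::real))"
    using filterlim_compose[OF lim1 ofr] sqP0 by simp
  have lim3: "((\<lambda>t. c2 - (csqrt (P (of_real t)) - c1) / of_real t) \<longlongrightarrow> 0) (at (0::real))"
    using tendsto_diff[OF tendsto_const lim2, of c2] by simp
  show "((\<lambda>t. (wirt_bar (wirt (f t)) w0
                   - of_real t * csqrt (wirt (wirt (f t)) w0 * wirt_bar (wirt_bar (f t)) w0))
                   / of_real (t\<^sup>2)) \<longlongrightarrow> 0) (at 0)"
  proof (rule Lim_transform_eventually[OF lim3])
    show "\<forall>\<^sub>F t in at 0. c2 - (csqrt (P (of_real t)) - c1) / of_real t =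
       (wirt_bar (wirt (f t)) w0 - of_real t * csqrt (wirt (wirt (f t)) w0 * wirt_bar (wirt_bar (f t)) w0)) / of_real (t\<^sup>2)"
      unfolding eventually_at_filter ww wbw
      by (auto simp: field_simps power2_eq_square)
  qed
qed

end
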